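(* Let $r$ be a tensor rank function. Then for every $\mathscr X\in\mathcal T$, $r(\mathscr X)=0$ if and only if $\mathscr X=\mathbf 0$.
   Context: $\mathcal T$ is the collection of all real tensors. A rank-one tensor is one of the form $x_{i_1\cdots i_N}=a^{(1)}_{i_1}\cdots a^{(N)}_{i_N}$ with all $\mathbf a^{(n)}$ nonzero vectors. $\mathscr I_{M,N}$ is the order-$N$ tensor of size $M\times\cdots\times M$ with $1$ in positions $(i,\dots,i)$ and $0$ elsewhere. The mode-$n$ product of $\mathscr X\in\mathbb R^{I_1\times\cdots\times I_N}$ with $\mathbf A\in\mathbb R^{J\times I_n}$ is $\mathscr X\times_n\mathbf A$ with entries $\sum_{i_n=1}^{I_n}x_{i_1\cdots i_N}a_{j i_n}$ at position $(i_1,\dots,i_{n-1},j,i_{n+1},\dots,i_N)$. A tensor rank function is a function $r:\mathcal T\to\mathbb N\cup\{0\}$ such that: (TR1) $r(\mathscr X)=1$ iff $\mathscr X$ is rank-one; (TR2) $r(\mathscr I_{M,N})=M$ whenever $N\ge2$; (TR3) for a matrix $\mathscr X\in\mathbb R^{I_1\times I_2}$, $r(\mathscr X)$ is its matrix rank; (TR4) if $\mathscr X\in\mathbb R^{I_1\times\cdots\times I_N}$ and $\mathscr X'$ is the corresponding tensor in $\mathbb R^{I_1\times\cdots\times I_N\times1}$, then $r(\mathscr X)=r(\mathscr X')$; (TR5) for $\pi\in S_N$, the tensor $\mathscr Y$ with $y_{i_1\cdots i_N}=x_{i_{\pi(1)}\cdots i_{\pi(N)}}$ satisfies $r(\mathscr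 Y)=r(\mathscr X)$; (TR6) $r(\mathscr X\times_n\mathbf A)\le r(\mathscr X)$ for all $\mathscr X\in\mathbb R^{I_1\times\cdots\times I_N}$, $n$, and $\mathbf A\in\mathbb R^{J\times I_n}$. *)

theory Defs
  imports "HOL-Combinatorics.Permutations" "Jordan_Normal_Form.DL_Rank"
begin

text \<open>A real tensor of order N = length d and size d!0 x ... x d!(N-1) is represented
  by its size list d and its entry function x on 0-based multi-indices (nat lists).
  Entries outside the valid index range are required to be 0, so that the pair (d, x)
  determines the tensor uniquely.\<close>

definition valid_index :: "nat list \<Rightarrow> nat list \<Rightarrow> bool" where
  "valid_index d i \<longleftrightarrow> length i = length d \<and> (\<forall>k<length d. i ! k < d ! k)"

definition is_tensor :: "nat list \<Rightarrow> (nat list \<Rightarrow> real) \<Rightarrow> bool" where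
  "is_tensor d x \<longleftrightarrow> length d \<ge> 1 \<and> (\<forall>k<length d. d ! k \<ge> 1) \<and>
     (\<forall>i. \<not> valid_index d i \<longrightarrow> x i = 0)"

definition rank_one :: "nat list \<Rightarrow> (nat list \<Rightarrow> real) \<Rightarrow> bool" where
  "rank_one d x \<longleftrightarrow> (\<exists>a :: nat \<Rightarrow> nat \<Rightarrow> real.
      (\<forall>n<length d. \<exists>i<d ! n. a n i \<noteq> 0) \<and>
      (\<forall>i. valid_index d i \<longrightarrow> x i = (\<Prod>n<length d. a n (i ! n))))"

definition diag_tensor :: "nat \<Rightarrow> nat \<Rightarrow> nat list \<Rightarrow> real" where
  "diag_tensor M N i =
     (if valid_index (replicate N M) i \<and> (\<forall>k<N. i ! k = i ! 0) then 1 else 0)"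

definition matrix_rank_of :: "nat list \<Rightarrow> (nat list \<Rightarrow> real) \<Rightarrow> nat" where
  "matrix_rank_of d x = vec_space.rank (d ! 0) (mat (d ! 0) (d ! 1) (\<lambda>(i, j). x [i, j]))"

definition extend_tensor :: "nat list \<Rightarrow> (nat list \<Rightarrow> real) \<Rightarrow> nat list \<Rightarrow> real" where
  "extend_tensor d x i = (if valid_index (d @ [1]) i then x (butlast i) else 0)"

text \<open>Permuted tensor: y_{i_1..i_N} = x_{i_pi(1)..i_pi(N)}; its size list has
  entry pi(k) equal to d!k.\<close>
definition perm_dims :: "(nat \<Rightarrow> nat) \<Rightarrow> nat list \<Rightarrow> nat list" where
  "perm_dims p d = map (\<lambda>m. d ! inv_into {..<length d} p m) [0..<length d]"

definition perm_tensor :: "(nat \<Rightarrow> nat) \<Rightarrow> nat list \<Rightarrow> (nat list \<Rightarrow> real) \<Rightarrow> nat list \<Rightarrow> real" where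
  "perm_tensor p d x i =
     (if valid_index (perm_dims p d) i then x (map (\<lambda>k. i ! p k) [0..<length d]) else 0)"

definition mode_dims :: "nat list \<Rightarrow> nat \<Rightarrow> nat \<Rightarrow> nat list" where
  "mode_dims d n J = d[n := J]"

definition mode_prod :: "nat list \<Rightarrow> (nat list \<Rightarrow> real) \<Rightarrow> nat \<Rightarrow> nat \<Rightarrow> (nat \<Rightarrow> nat \<Rightarrow> real)
    \<Rightarrow> nat list \<Rightarrow> real" where
  "mode_prod d x n J A i =
     (if valid_index (d[n := J]) i then (\<Sum>k<d ! n. x (i[n := k]) * A (i ! n) k) else 0)"

definition tensor_rank_function :: "(nat list \<Rightarrow> (nat list \<Rightarrow> real) \<Rightarrow> nat) \<Rightarrow> bool" where
  "tensor_rank_function r \<longleftrightarrow>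
     (\<forall>d x. is_tensor d x \<longrightarrow> (r d x = 1 \<longleftrightarrow> rank_one d x)) \<and>
     (\<forall>M N. M \<ge> 1 \<longrightarrow> N \<ge> 2 \<longrightarrow> r (replicate N M) (diag_tensor M N) = M) \<and>
     (\<forall>d x. is_tensor d x \<longrightarrow> length d = 2 \<longrightarrow> r d x = matrix_rank_of d x) \<and>
     (\<forall>d x. is_tensor d x \<longrightarrow> r (d @ [1]) (extend_tensor d x) = r d x) \<and>
     (\<forall>d x p. is_tensor d x \<longrightarrow> p permutes {..<length d} \<longrightarrow>
        r (perm_dims p d) (perm_tensor p d x) = r d x) \<and>
     (\<forall>d x n J A. is_tensor d x \<longrightarrow> n < length d \<longrightarrow> J \<ge> 1 \<longrightarrow>
        r (mode_dims d n J) (mode_prod d x n J A) \<le> r d x)"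

end

theory Submission
  imports Defs
begin

lemma zero_not_rank_one:
  assumes "is_tensor d x" shows "\<not> rank_one d (\<lambda>_. 0)"
proof
  assume "rank_one d (\<lambda>_. 0)"
  then obtain a where a1: "\<forall>n<length d. \<exists>i<d ! n. a n i \<noteq> 0"
    and a2: "\<forall>i. valid_index d i \<longrightarrow> (0::real) = (\<Prod>n<length d. a n (i ! n))"
    unfolding rank_one_def by blast
  from a1 have "\<forall>n\<in>{..<length d}. \<exists>i. i < d ! n \<and> a n i \<noteq> 0" by blast
  then obtain f where f: "\<And>n. n < length d \<Longrightarrow> f n < d ! n \<and> a n (f n) \<noteq> 0"
    by (metis lessThan_iff)
  define i where "i = map f [0..<length d]"
  have "valid_index d i" unfolding valid_index_def i_def using f by auto
  with a2 have "(\<Prod>n<length d. a n (i ! n)) = 0" by simp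
  moreover have "(\<Prod>n<length d. a n (i ! n)) \<noteq> 0"
    using f by (simp add: i_def)
  ultimately show False by simp
qed

theorem proposition4p3:
  fixes r :: "nat list \<Rightarrow> (nat list \<Rightarrow> real) \<Rightarrow> nat"
    and d :: "nat list" and x :: "nat list \<Rightarrow> real"
  assumes "tensor_rank_function r"
    and "is_tensor d x"
  shows "r d x = 0 \<longleftrightarrow> x = (\<lambda>_. 0)"
proof
  have TR1: "\<And>d x. is_tensor d x \<Longrightarrow> (r d x = 1 \<longleftrightarrow> rank_one d x)"
    and TR6: "\<And>d x n J A. is_tensor d x \<Longrightarrow> n < length d \<Longrightarrow> J \<ge> 1 \<Longrightarrow>
        r (mode_dims d n J) (mode_prod d x n J A) \<le> r d x"
    using assms(1) unfolding tensor_rank_function_def by blast+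
  have len: "length d \<ge> 1" and dpos: "\<And>k. k < length d \<Longrightarrow> d ! k \<ge> 1"
    and outside: "\<And>i. \<not> valid_index d i \<Longrightarrow> x i = 0"
    using assms(2) unfolding is_tensor_def by auto
  show "x = (\<lambda>_. 0)" if "r d x = 0"
  proof (rule ccontr)
    assume "x \<noteq> (\<lambda>_. 0)"
    then obtain c where xc: "x c \<noteq> 0" by auto
    hence cv: "valid_index d c" using outside by blast
    define D where "D m = map (\<lambda>k. if k < m then 1 else d ! k) [0..<length d]" for m
    define X where "X m i = (if valid_index (D m) i
       then x (map (\<lambda>k. if k < m then c ! k else i ! k) [0..<length d]) else 0)" for m i
    have main: "m \<le> length d \<Longrightarrow> is_tensor (D m) (X m) \<and> r (D m) (X m) \<le> r d x" for m
    proof (induction m)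
      case 0
      have "D 0 = d" unfolding D_def by (simp add: map_nth)
      moreover have "X 0 = x"
      proof
        fix i show "X 0 i = x i"
        proof (cases "valid_index d i")
          case True
          hence "map (\<lambda>k. i ! k) [0..<length d] = i"
            unfolding valid_index_def by (metis map_nth)
          thus ?thesis using True \<open>D 0 = d\<close> unfolding X_def by simp
        next
          case False thus ?thesis using outside \<open>D 0 = d\<close> unfolding X_def by simp
        qed
      qed
      ultimately show ?case using assms(2) by simp
    next
      case (Suc m)
      hence IH: "is_tensor (D m) (X m)" "r (D m) (X m) \<le> r d x" and ml: "m < length d" by auto
      define A where "A = (\<lambda>(j::nat) k. if k = c ! m then 1 else (0::real))"
      have Deq: "mode_dims (D m) m 1 = D (Suc m)"
        unfolding mode_dims_def D_def by (rule nth_equalityI) (auto simp: nth_list_update less_Suc_eq)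
      have Xeq: "mode_prod (D m) (X m) m 1 A = X (Suc m)"
      proof
        fix i
        show "mode_prod (D m) (X m) m 1 A i = X (Suc m) i"
        proof (cases "valid_index (D (Suc m)) i")
          case False
          thus ?thesis using Deq unfolding mode_prod_def mode_dims_def X_def by simp
        next
          case True
          have Dm: "D m ! m = d ! m" using ml unfolding D_def by simp
          have cm: "c ! m < d ! m" using cv ml unfolding valid_index_def by auto
          have "(\<Sum>k<D m ! m. X m (i[m := k]) * A (i ! m) k) = X m (i[m := c ! m])"
            unfolding Dm A_def using cm by (simp add: sum.delta' if_distrib cong: if_cong)
          moreover have vi: "valid_index (D m) (i[m := c ! m])"
            using True cm ml unfolding valid_index_def D_def
            apply (auto simp: nth_list_update)
            subgoal for k by (drule_tac x=k in spec) simp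
            done
          moreover have "map (\<lambda>k. if k < m then c ! k else i[m := c ! m] ! k) [0..<length d]
              = map (\<lambda>k. if k < Suc m then c ! k else i ! k) [0..<length d]"
            using True ml unfolding valid_index_def D_def by (auto simp: nth_list_update less_Suc_eq)
          ultimately show ?thesis using True Deq unfolding mode_prod_def mode_dims_def X_def
            by simp
        qed
      qed
      have "length (D m) = length d" unfolding D_def by simp
      have "r (D (Suc m)) (X (Suc m)) \<le> r (D m) (X m)"
        using TR6[OF IH(1), of m 1 A] Deq Xeq ml \<open>length (D m) = length d\<close> by simp
      moreover have "is_tensor (D (Suc m)) (X (Suc m))"
        unfolding is_tensor_def using len dpos
        by (auto simp: D_def X_def)
      ultimately show ?case using IH by simp
    qed
    let ?N = "length d"
    from main[of ?N] have T: "is_tensor (D ?N) (X ?N)" and le: "r (D ?N) (X ?N) \<le> r d x" by auto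
    have "rank_one (D ?N) (X ?N)"
      unfolding rank_one_def
    proof (intro exI[of _ "\<lambda>n j. if n = 0 then x c else 1"] conjI allI impI)
      show "\<exists>i<D ?N ! n. (if n = 0 then x c else 1) \<noteq> 0" if "n < length (D ?N)" for n
        using that xc by (auto simp: D_def)
      show "X ?N i = (\<Prod>n<length (D ?N). if n = 0 then x c else 1)" if "valid_index (D ?N) i" for i
      proof -
        have "map (\<lambda>k. if k < ?N then c ! k else i ! k) [0..<?N] = c"
          using cv unfolding valid_index_def by (auto intro!: nth_equalityI)
        moreover have "length (D ?N) = ?N" by (simp add: D_def)
        ultimately show ?thesis using that len unfolding X_def
          by (auto simp: prod.delta)
      qed
    qed
    hence "r (D ?N) (X ?N) = 1" using TR1[OF T] by simp
    with le that show False by simp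
  qed
  show "r d x = 0" if x0: "x = (\<lambda>_. 0)"
  proof -
    define Ones where "Ones i = (if valid_index d i then 1 else (0::real))" for i
    have TO: "is_tensor d Ones" using len dpos unfolding is_tensor_def Ones_def by auto
    have "rank_one d Ones" unfolding rank_one_def Ones_def
      by (rule exI[of _ "\<lambda>n j. (1::real)"]) (use dpos in \<open>auto simp: Suc_le_eq\<close>)
    hence r1: "r d Ones = 1" using TR1[OF TO] by simp
    have "mode_dims d 0 (d ! 0) = d" unfolding mode_dims_def by simp
    moreover have "mode_prod d Ones 0 (d ! 0) (\<lambda>_ _. 0) = (\<lambda>_. 0)"
      unfolding mode_prod_def by auto
    ultimately have "r d (\<lambda>_. 0) \<le> 1"
      using TR6[OF TO, of 0 "d ! 0" "\<lambda>_ _. 0"] len dpos r1 by fastforce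
    moreover have "r d (\<lambda>_. 0) \<noteq> 1"
      using TR1[of d "\<lambda>_. 0"] assms(2) x0 zero_not_rank_one by blast
    ultimately show ?thesis using x0 by simp
  qed
qed

end
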